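(* Let $m \geq 4$, let $D \in \mathbb{R}^{m \times 4}$ have full (column) rank, and let $b \in \mathbb{R}^m$. Let $E \in \mathbb{S}^4$ and $c \in \mathbb{R}^4$ be given by $E_{23}=E_{32}=\tfrac12$, all other entries of $E$ zero, and $c=(0,0,0,-1)^\intercal$, so that for $x=(x_1,x_2,x_3,x_4)^\intercal$ we have $r(x) := x^\intercal E x + c^\intercal x = x_2x_3 - x_4$. Consider the nonconvex problem $$\text{(NC1)}:\quad \underset{x\in\mathbb{R}^4}{\mathrm{minimize}}\ \tfrac12\|Dx-b\|_2^2 \quad \text{s.t. } r(x)=0,$$ and the convex problem $$\text{(P)}:\quad \underset{X\in\mathbb{S}^4,\ x\in\mathbb{R}^4}{\mathrm{minimize}}\ \tfrac12\operatorname{tr}(D^\intercal D X) - b^\intercal D x + \tfrac12 b^\intercal b \quad \text{s.t. } X \succeq xx^\intercal,\ \operatorname{tr}(EX)+c^\intercal x = 0.$$ Then (NC1) and (P) are equivalent (in particular, they have the same optimal value), and the optimal solution of (NC1) is attained.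
   Context: $\mathbb{S}^4$ denotes the space of real symmetric $4\times 4$ matrices, and $X \succeq xx^\intercal$ means $X - xx^\intercal$ is positive semidefinite. In the application, $x=(k_v,k_g,g_*,u)$ with $u$ a dummy variable representing $k_g g_*$, so the constraint $r(x)=0$ encodes $k_g g_* = u$. *)

theory Defs
  imports "HOL-Analysis.Analysis"
begin

text \<open>Vectors in R^4 are real^4, components indexed 1,2,3,4 (as for vector [a,b,c,d]).\<close>

definition outer :: "real^'n \<Rightarrow> real^'n^'n" where
  "outer x = (\<chi> i j. x $ i * x $ j)"

definition psd :: "real^'n^'n \<Rightarrow> bool" where
  "psd M \<longleftrightarrow> transpose M = M \<and> (\<forall>v. 0 \<le> v \<bullet> (M *v v))"

definition Emat :: "real^4^4" where
  "Emat = (\<chi> i j. if (i = 2 \<and> j = 3) \<or> (i = 3 \<and> j = 2) then 1/2 else 0)"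

definition cvec :: "real^4" where
  "cvec = vector [0, 0, 0, -1]"

definition rfun :: "real^4 \<Rightarrow> real" where
  "rfun x = x \<bullet> (Emat *v x) + cvec \<bullet> x"

definition nc1_obj :: "real^4^'m \<Rightarrow> real^'m \<Rightarrow> real^4 \<Rightarrow> real" where
  "nc1_obj D b x = (1/2) * (norm (D *v x - b))\<^sup>2"

definition nc1_feasible :: "real^4 \<Rightarrow> bool" where
  "nc1_feasible x \<longleftrightarrow> rfun x = 0"

definition p_obj :: "real^4^'m \<Rightarrow> real^'m \<Rightarrow> real^4^4 \<Rightarrow> real^4 \<Rightarrow> real" where
  "p_obj D b X x = (1/2) * trace (transpose D ** D ** X) - b \<bullet> (D *v x) + (1/2) * (b \<bullet> b)"

definition p_feasible :: "real^4^4 \<Rightarrow> real^4 \<Rightarrow> bool" where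
  "p_feasible X x \<longleftrightarrow> transpose X = X \<and> psd (X - outer x) \<and> trace (Emat ** X) + cvec \<bullet> x = 0"

definition nc1_val :: "real^4^'m \<Rightarrow> real^'m \<Rightarrow> real" where
  "nc1_val D b = Inf (nc1_obj D b ` {x. nc1_feasible x})"

definition p_val :: "real^4^'m \<Rightarrow> real^'m \<Rightarrow> real" where
  "p_val D b = Inf ((\<lambda>(X, x). p_obj D b X x) ` {(X, x). p_feasible X x})"

end

theory Submission
  imports Defs
begin

lemma cvec_comp: "cvec$1 = 0" "cvec$2 = 0" "cvec$3 = 0" "cvec$4 = -1"
  unfolding cvec_def vector_def by simp_all

lemma cvec_inner: "cvec \<bullet> x = - x$4"
  apply (simp add: inner_vec_def sum_4)
  using cvec_comp apply simp
  done

lemma rfun_eq: "rfun x = x$2 * x$3 - x$4"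
  unfolding rfun_def cvec_inner
  by (simp add: Emat_def inner_vec_def sum_4 matrix_vector_mult_def algebra_simps)

lemma trE: "trace (Emat ** X) = (X$3$2 + X$2$3)/2"
  by (simp add: trace_def Emat_def sum_4 matrix_matrix_mult_def)

lemma trace_DtD: "trace (transpose D ** D ** Y) = (\<Sum>k\<in>UNIV. D$k \<bullet> (Y *v D$k))"
proof -
  have "trace (transpose D ** D ** Y) = (\<Sum>i\<in>UNIV. \<Sum>j\<in>UNIV. \<Sum>k\<in>UNIV. D$k$i * D$k$j * Y$j$i)"
    by (simp add: trace_def matrix_matrix_mult_def transpose_def sum_distrib_right)
  also have "\<dots> = (\<Sum>i\<in>UNIV. \<Sum>k\<in>UNIV. \<Sum>j\<in>UNIV. D$k$i * D$k$j * Y$j$i)"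
    by (rule sum.cong[OF refl], rule sum.swap)
  also have "\<dots> = (\<Sum>k\<in>UNIV. \<Sum>i\<in>UNIV. \<Sum>j\<in>UNIV. D$k$i * D$k$j * Y$j$i)"
    by (rule sum.swap)
  also have "\<dots> = (\<Sum>k\<in>UNIV. \<Sum>j\<in>UNIV. \<Sum>i\<in>UNIV. D$k$i * D$k$j * Y$j$i)"
    by (rule sum.cong[OF refl], rule sum.swap)
  also have "\<dots> = (\<Sum>k\<in>UNIV. D$k \<bullet> (Y *v D$k))"
    by (simp add: inner_vec_def matrix_vector_mult_def sum_distrib_left mult_ac)
  finally show ?thesis .
qed

lemma psd_sym: "psd S \<Longrightarrow> u \<bullet> (S *v w) = w \<bullet> (S *v u)"
proof -
  assume "psd S"
  then have tS: "transpose S = S" by (simp add: psd_def)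
  have "u \<bullet> (S *v w) = (u v* S) \<bullet> w" by (simp add: dot_lmul_matrix)
  also have "\<dots> = (transpose S *v u) \<bullet> w" by simp
  also have "\<dots> = w \<bullet> (S *v u)" using tS by (simp add: inner_commute)
  finally show ?thesis .
qed

lemma psd_cs:
  fixes S :: "real^'n^'n"
  assumes "psd S" "0 < u \<bullet> (S *v u)"
  shows "(w \<bullet> (S *v u))^2 \<le> (w \<bullet> (S *v w)) * (u \<bullet> (S *v u))"
proof -
  define a where "a = u \<bullet> (S *v u)"
  define c where "c = w \<bullet> (S *v u)"
  have uw: "u \<bullet> (S *v w) = c" using psd_sym[OF assms(1)] c_def by simp
  have "0 \<le> (a *\<^sub>R w - c *\<^sub>R u) \<bullet> (S *v (a *\<^sub>R w - c *\<^sub>R u))"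
    using assms(1) by (simp add: psd_def)
  also have "\<dots> = a^2 * (w \<bullet> (S *v w)) - a * c^2"
    by (simp add: matrix_vector_mult_diff_distrib matrix_vector_mult_scaleR inner_diff_left inner_diff_right
        uw flip: c_def a_def) (simp add: algebra_simps power2_eq_square)
  finally have "a * c^2 \<le> a * (a * (w \<bullet> (S *v w)))" by (simp add: power2_eq_square algebra_simps)
  then have "c^2 \<le> a * (w \<bullet> (S *v w))" using assms(2) a_def by simp
  then show ?thesis by (simp add: a_def c_def mult.commute)
qed

lemma outer_inner: fixes d :: "real^'n" shows "d \<bullet> (outer x *v d) = (d \<bullet> x)^2"
  by (simp add: outer_def inner_vec_def matrix_vector_mult_def power2_eq_square sum_product
      sum_distrib_left mult_ac)

lemma norm_Mx: fixes D :: "real^'n^'m" shows "(norm (D *v x))^2 = (\<Sum>k\<in>UNIV. (D$k \<bullet> x)^2)"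
  unfolding power2_norm_eq_inner
  unfolding inner_vec_def[of "D *v x"]
  by (rule sum.cong) (simp_all add: matrix_vector_mul_component power2_eq_square inner_real_def)


lemma pobj_eq:
  fixes D :: "real^4^'m"
  shows "p_obj D b X x = nc1_obj D b x + (\<Sum>k\<in>UNIV. D$k \<bullet> ((X - outer x) *v D$k)) / 2"
proof -
  have "trace (transpose D ** D ** X) = (\<Sum>k\<in>UNIV. D$k \<bullet> ((X - outer x) *v D$k)) + (\<Sum>k\<in>UNIV. (D$k \<bullet> x)^2)"
    unfolding trace_DtD sum.distrib[symmetric]
    by (rule sum.cong) (simp_all add: matrix_vector_mult_diff_rdistrib inner_diff_right outer_inner)
  also have "\<dots> = (\<Sum>k\<in>UNIV. D$k \<bullet> ((X - outer x) *v D$k)) + (norm (D *v x))^2"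
    by (simp add: norm_Mx)
  finally have tr: "trace (transpose D ** D ** X) = (\<Sum>k\<in>UNIV. D$k \<bullet> ((X - outer x) *v D$k)) + (norm (D *v x))^2" .
  have n: "(norm (D *v x - b))^2 = (norm (D *v x))^2 - 2 * (b \<bullet> (D *v x)) + b \<bullet> b"
    unfolding power2_norm_eq_inner by (simp add: inner_diff_left inner_diff_right inner_commute)
  show ?thesis unfolding p_obj_def nc1_obj_def tr n by (simp add: field_simps)
qed

lemma psd_diag_pos:
  fixes S :: "real^4^4"
  assumes "psd S" "S$2$3 \<noteq> 0"
  shows "0 < S$2$2"
proof -
  have sym: "S$3$2 = S$2$3"
  proof -
    have "transpose S = S" using assms(1) by (simp add: psd_def)
    then have "(transpose S)$3$2 = S$3$2" by simp
    then show ?thesis by (simp add: transpose_def)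
  qed
  have q: "0 \<le> t^2 * S$2$2 + 2 * t * S$2$3 + S$3$3" for t
  proof -
    define w :: "real^4" where "w = (\<chi> i. if i = 2 then t else if i = 3 then 1 else 0)"
    have w1: "w$1 = 0" "w$2 = t" "w$3 = 1" "w$4 = 0" by (simp_all add: w_def)
    have "0 \<le> w \<bullet> (S *v w)" using assms(1) by (simp add: psd_def)
    also have "\<dots> = t * (S$2$2 * t + S$2$3) + (S$3$2 * t + S$3$3)"
      unfolding inner_vec_def matrix_vector_mult_def sum_4 w1 by simp
    also have "\<dots> = t^2 * S$2$2 + 2 * t * S$2$3 + S$3$3"
      unfolding sym by (simp add: power2_eq_square algebra_simps)
    finally show ?thesis .
  qed
  show ?thesis
  proof (rule ccontr)
    assume "\<not> 0 < S$2$2"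
    then have z: "S$2$2 \<le> 0" by simp
    define t where "t = - (\<bar>S$3$3\<bar> + 1) / (2 * S$2$3)"
    have e: "2 * t * S$2$3 = - (\<bar>S$3$3\<bar> + 1)" using assms(2) by (simp add: t_def)
    have "t^2 * S$2$2 \<le> 0" using z by (simp add: mult_nonneg_nonpos)
    then show False using q[of t] e by linarith
  qed
qed




lemma relax_bound:
  fixes D :: "real^4^'m"
  assumes "p_feasible X x"
  shows "\<exists>y. nc1_feasible y \<and> nc1_obj D b y \<le> p_obj D b X x"
proof -
  define S where "S = X - outer x"
  have symX: "transpose X = X" and psdS: "psd S" and con: "trace (Emat ** X) + cvec \<bullet> x = 0"
    using assms by (simp_all add: p_feasible_def S_def)
  have X32: "X$3$2 = X$2$3"
  proof -
    have "(transpose X)$3$2 = X$3$2" using symX by simp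
    then show ?thesis by (simp add: transpose_def)
  qed
  have Sij: "S$i$j = X$i$j - x$i * x$j" for i j by (simp add: S_def outer_def)
  define s where "s = S$2$3"
  have rx: "x$2 * x$3 - x$4 = - s"
    using con unfolding trE cvec_inner X32 s_def Sij by simp
  define T where "T = (\<Sum>k\<in>UNIV. D$k \<bullet> (S *v D$k))"
  have pobj: "p_obj D b X x = nc1_obj D b x + T/2"
    unfolding pobj_eq T_def S_def ..
  have Tnn: "0 \<le> T" unfolding T_def
    by (rule sum_nonneg) (use psdS in \<open>simp add: psd_def\<close>)
  show ?thesis
  proof (cases "s = 0")
    case True
    then have "nc1_feasible x" using rx by (simp add: nc1_feasible_def rfun_eq)
    moreover have "nc1_obj D b x \<le> p_obj D b X x" using pobj Tnn by simp
    ultimately show ?thesis by blast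
  next
    case False
    define a where "a = S$2$2"
    have apos: "0 < a" using psd_diag_pos[OF psdS] False by (simp add: a_def s_def)
    define u :: "real^4" where "u = axis 2 1"
    define v where "v = S *v u"
    have vi: "v$i = S$i$2" for i by (simp add: v_def u_def matrix_vector_mult_basis column_def)
    have symS: "S$3$2 = S$2$3"
    proof -
      have "(transpose S)$3$2 = S$3$2" using psdS by (simp add: psd_def)
      then show ?thesis by (simp add: transpose_def)
    qed
    have v2: "v$2 = a" and v3: "v$3 = s" using vi symS by (simp_all add: a_def s_def)
    have ua: "u \<bullet> (S *v u) = a" unfolding u_def inner_axis' by (simp add: matrix_vector_mult_basis column_def a_def)
    define \<beta> where "\<beta> = (x$2 * s + x$3 * a - v$4) / s"
    have rline: "rfun (x + t *\<^sub>R v) = s * (a*t^2 + \<beta>*t - 1)" for t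
    proof -
      have "rfun (x + t *\<^sub>R v) = (x$2 + t*a) * (x$3 + t * s) - (x$4 + t * v$4)"
        by (simp add: rfun_eq v2 v3)
      also have "\<dots> = (x$2 * x$3 - x$4) + t * (x$2 * s + x$3 * a - v$4) + t^2 * a * s"
        by (simp add: algebra_simps power2_eq_square)
      also have "\<dots> = s * (a*t^2 + \<beta>*t - 1)"
        unfolding rx \<beta>_def using False by (simp add: field_simps power2_eq_square)
      finally show ?thesis .
    qed
    define G where "G = (D *v x - b) \<bullet> (D *v v)"
    define Q where "Q = (norm (D *v v))^2"
    have fline: "nc1_obj D b (x + t *\<^sub>R v) = nc1_obj D b x + t*G + Q/2*t^2" for t
    proof -
      have "D *v (x + t *\<^sub>R v) - b = (D *v x - b) + t *\<^sub>R (D *v v)"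
        by (simp add: matrix_vector_right_distrib matrix_vector_mult_scaleR)
      then show ?thesis
        unfolding nc1_obj_def G_def Q_def power2_norm_eq_inner
        by (simp add: inner_add_left inner_add_right inner_commute algebra_simps power2_eq_square)
    qed
    have QT: "Q \<le> a * T"
    proof -
      have "Q = (\<Sum>k\<in>UNIV. (D$k \<bullet> (S *v u))^2)" unfolding Q_def norm_Mx v_def ..
      also have "\<dots> \<le> (\<Sum>k\<in>UNIV. (D$k \<bullet> (S *v D$k)) * a)"
        by (rule sum_mono) (use psd_cs[OF psdS, of u] ua apos in auto)
      also have "\<dots> = a * T" by (simp add: T_def sum_distrib_left mult.commute)
      finally show ?thesis .
    qed
    have gen: "\<exists>y. nc1_feasible y \<and> nc1_obj D b y \<le> p_obj D b X x"
      if root: "a*t^2 + \<beta>*t - 1 = 0" and sg: "t * (G - Q*\<beta>/(2*a)) \<le> 0" for t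
    proof -
      have feas: "nc1_feasible (x + t *\<^sub>R v)" unfolding nc1_feasible_def rline root by simp
      have t2: "t^2 = (1 - \<beta>*t)/a" using root apos by (simp add: field_simps)
      have "nc1_obj D b (x + t *\<^sub>R v) = nc1_obj D b x + Q/(2*a) + t * (G - Q*\<beta>/(2*a))"
        unfolding fline t2 using apos by (simp add: field_simps)
      also have "\<dots> \<le> nc1_obj D b x + Q/(2*a)" using sg by simp
      also have "\<dots> \<le> nc1_obj D b x + T/2"
        using QT apos by (simp add: field_simps)
      finally show ?thesis using feas pobj by auto
    qed
    define r where "r = sqrt (\<beta>^2 + 4*a)"
    have rsq: "r^2 = \<beta>^2 + 4*a" unfolding r_def using apos
      by (simp add: add_nonneg_pos)
    have rgt: "\<bar>\<beta>\<bar> < r"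
    proof -
      have "sqrt (\<beta>^2) < r" unfolding r_def using apos by (intro real_sqrt_less_mono) simp
      then show ?thesis by simp
    qed
    define t1 where "t1 = (-\<beta> + r)/(2*a)"
    define t2 where "t2 = (-\<beta> - r)/(2*a)"
    have t1pos: "0 < t1" unfolding t1_def using rgt apos by (intro divide_pos_pos) auto
    have t2neg: "t2 < 0" unfolding t2_def using rgt apos by (intro divide_neg_pos) auto
    have rt1: "a*t1^2 + \<beta>*t1 - 1 = 0"
    proof -
      have "4*a*(a*t1^2 + \<beta>*t1 - 1) = r^2 - \<beta>^2 - 4*a"
        unfolding t1_def using apos by (simp add: field_simps power2_eq_square)
      then show ?thesis using rsq apos by simp
    qed
    have rt2: "a*t2^2 + \<beta>*t2 - 1 = 0"
    proof -
      have "4*a*(a*t2^2 + \<beta>*t2 - 1) = r^2 - \<beta>^2 - 4*a"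
        unfolding t2_def using apos by (simp add: field_simps power2_eq_square)
      then show ?thesis using rsq apos by simp
    qed
    show ?thesis
    proof (cases "G - Q*\<beta>/(2*a) \<le> 0")
      case True
      have "t1 * (G - Q*\<beta>/(2*a)) \<le> 0" using True t1pos by (intro mult_nonneg_nonpos) auto
      then show ?thesis using gen[OF rt1] by blast
    next
      case False
      have "t2 * (G - Q*\<beta>/(2*a)) \<le> 0" using False t2neg by (intro mult_nonpos_nonneg) auto
      then show ?thesis using gen[OF rt2] by blast
    qed
  qed
qed


lemma cont_mv: fixes D :: "real^'n^'m" shows "continuous_on A (\<lambda>x. D *v x)"
  by (rule linear_continuous_on) (simp add: linear_conv_bounded_linear[symmetric])

lemma attain:
  fixes D :: "real^4^'m"
  assumes "rank D = 4"
  shows "\<exists>x. nc1_feasible x \<and> (\<forall>y. nc1_feasible y \<longrightarrow> nc1_obj D b x \<le> nc1_obj D b y)"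
proof -
  have "inj ((*v) D)" using assms full_rank_injective[of D] by simp
  then obtain B where B: "B > 0" "\<And>x. B * norm x \<le> norm (D *v x)"
    using linear_inj_bounded_below_pos[of "(*v) D"] by auto
  define c where "c = nc1_obj D b 0"
  define K where "K = {x. x$2 * x$3 - x$4 = 0} \<inter> {x. nc1_obj D b x \<le> c}"
  have cl: "closed K" unfolding K_def nc1_obj_def
    by (intro closed_Int closed_Collect_eq closed_Collect_le continuous_intros cont_mv)
  have bd: "bounded K"
  proof -
    have "norm x \<le> 2 * norm b / B" if "x \<in> K" for x
    proof -
      have "(norm (D *v x - b))^2 \<le> (norm b)^2"
        using that by (simp add: K_def c_def nc1_obj_def)
      then have "norm (D *v x - b) \<le> norm b" by (simp add: power2_le_iff_abs_le)
      then have "norm (D *v x) \<le> 2 * norm b" using norm_triangle_sub[of "D *v x" b] by linarith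
      then have "B * norm x \<le> 2 * norm b" using B(2)[of x] by linarith
      then show ?thesis using B(1) by (simp add: field_simps mult.commute)
    qed
    then show ?thesis unfolding bounded_iff by blast
  qed
  have ne: "0 \<in> K" by (simp add: K_def c_def)
  have "continuous_on K (nc1_obj D b)" unfolding nc1_obj_def
    by (intro continuous_intros cont_mv)
  then obtain x where x: "x \<in> K" "\<And>y. y \<in> K \<Longrightarrow> nc1_obj D b x \<le> nc1_obj D b y"
    using continuous_attains_inf[of K "nc1_obj D b"] cl bd ne compact_eq_bounded_closed by blast
  show ?thesis
  proof (intro exI conjI allI impI)
    show "nc1_feasible x" using x(1) by (simp add: K_def nc1_feasible_def rfun_eq)
    fix y assume "nc1_feasible y"
    then have y: "y$2 * y$3 - y$4 = 0" by (simp add: nc1_feasible_def rfun_eq)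
    show "nc1_obj D b x \<le> nc1_obj D b y"
    proof (cases "y \<in> K")
      case True then show ?thesis using x(2) by blast
    next
      case False
      then have "c < nc1_obj D b y" using y by (simp add: K_def)
      moreover have "nc1_obj D b x \<le> c" using x(1) by (simp add: K_def)
      ultimately show ?thesis by simp
    qed
  qed
qed

lemma outer_feas: "nc1_feasible x \<Longrightarrow> p_feasible (outer x) x"
proof -
  assume "nc1_feasible x"
  then have r: "x$2 * x$3 - x$4 = 0" by (simp add: nc1_feasible_def rfun_eq)
  have t: "transpose (outer x) = outer x" by (simp add: vec_eq_iff transpose_def outer_def mult.commute)
  have p: "psd (outer x - outer x)" by (simp add: psd_def transpose_def vec_eq_iff)
  have "trace (Emat ** outer x) + cvec \<bullet> x = 0"
    unfolding trE cvec_inner using r by (simp add: outer_def mult.commute)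
  then show ?thesis using t p by (simp add: p_feasible_def)
qed

lemma outer_obj: fixes D :: "real^4^'m" shows "p_obj D b (outer x) x = nc1_obj D b x"
  by (simp add: pobj_eq)

theorem lemma1:
  fixes D :: "real^4^'m" and b :: "real^'m"
  assumes "CARD('m) \<ge> 4"
    and "rank D = 4"
  shows "nc1_val D b = p_val D b
    \<and> (\<exists>x. nc1_feasible x \<and> nc1_obj D b x = nc1_val D b)
    \<and> (\<forall>x. nc1_feasible x \<and> nc1_obj D b x = nc1_val D b
           \<longrightarrow> p_feasible (outer x) x \<and> p_obj D b (outer x) x = p_val D b)"
proof -
  obtain xs where xs: "nc1_feasible xs" "\<And>y. nc1_feasible y \<Longrightarrow> nc1_obj D b xs \<le> nc1_obj D b y"
    using attain[OF assms(2), of b] by blast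
  have nv: "nc1_val D b = nc1_obj D b xs"
    unfolding nc1_val_def by (rule cInf_eq_minimum) (use xs in auto)
  have pv: "p_val D b = nc1_obj D b xs"
    unfolding p_val_def
  proof (rule cInf_eq_minimum)
    show "nc1_obj D b xs \<in> (\<lambda>(X, x). p_obj D b X x) ` {(X, x). p_feasible X x}"
      using outer_feas[OF xs(1)] outer_obj[of D b xs]
      by (auto intro!: image_eqI[where x="(outer xs, xs)"])
  next
    fix z assume "z \<in> (\<lambda>(X, x). p_obj D b X x) ` {(X, x). p_feasible X x}"
    then obtain X x where "p_feasible X x" "z = p_obj D b X x" by auto
    then show "nc1_obj D b xs \<le> z" using relax_bound[of X x D b] xs(2) by fastforce
  qed
  show ?thesis
  proof (intro conjI)
    show "nc1_val D b = p_val D b" using nv pv by simp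
    show "\<exists>x. nc1_feasible x \<and> nc1_obj D b x = nc1_val D b" using xs(1) nv by auto
    show "\<forall>x. nc1_feasible x \<and> nc1_obj D b x = nc1_val D b
           \<longrightarrow> p_feasible (outer x) x \<and> p_obj D b (outer x) x = p_val D b"
    proof (intro allI impI)
      fix x assume h: "nc1_feasible x \<and> nc1_obj D b x = nc1_val D b"
      have "p_obj D b (outer x) x = nc1_obj D b x" by (rule outer_obj)
      then show "p_feasible (outer x) x \<and> p_obj D b (outer x) x = p_val D b"
        using h outer_feas nv pv by simp
    qed
  qed
qed

end
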